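(* Let $\kappa>0$, $a>0$ and $0\le\gamma<\pi/2$. Then there exists a $\kappa$-cylindrical surface over the strip $\Omega=\{(x,y): |x|<a\}$ making contact angle $\gamma$ with the vertical plates $\{x=\pm a\}$. Precisely: there exists $u_0>0$ such that the solution $u=u(r;u_0)$ of $\frac{d}{dr}\big(u'/\sqrt{1+u'^2}\big)=\kappa u$, $u(0)=u_0$, $u'(0)=0$, is defined on $[0,a)$ and $\sin\psi(r)\to\cos\gamma$ as $r\to a$, where $\sin\psi=u'/\sqrt{1+u'^2}$.
   Context: The surface is $z=u(x)$, $(x,y)\in\Omega$, with $u$ even; it solves $\operatorname{div}\big(Du/\sqrt{1+|Du|^2}\big)=\kappa u$ in $\Omega$ and the Young boundary condition $\nu\cdot Du/\sqrt{1+|Du|^2}=\cos\gamma$ on $\partial\Omega$ ($\nu$ the exterior unit normal). *)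

theory Defs
  imports "HOL-Analysis.Analysis"
begin

end

theory Submission
  imports Defs
begin


definition Uf :: "real \<Rightarrow> real \<Rightarrow> real \<Rightarrow> real" where
  "Uf k c s = sqrt (c + 2 * (1 - cos s) / k)"

definition gf :: "real \<Rightarrow> real \<Rightarrow> real \<Rightarrow> real" where
  "gf k c s = cos s / (k * Uf k c s)"

lemma Uf_ge: assumes "k > 0" "c > 0" shows "sqrt c \<le> Uf k c s"
proof -
  have "0 \<le> 2 * (1 - cos s) / k" using assms by (simp add: divide_nonneg_pos)
  then show ?thesis unfolding Uf_def by simp
qed

lemma Uf_pos: assumes "k > 0" "c > 0" shows "0 < Uf k c s"
  using Uf_ge[OF assms, of s] assms by (meson less_le_trans real_sqrt_gt_zero)

lemma gf_cont: assumes "k > 0" "c > 0" shows "continuous_on S (gf k c)"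
proof -
  have ne: "\<And>s. k * sqrt (c + 2 * (1 - cos s) / k) \<noteq> 0"
    using Uf_pos[OF assms] assms unfolding Uf_def by (metis mult_pos_pos less_irrefl)
  have "continuous_on S (\<lambda>s. cos s / (k * sqrt (c + 2 * (1 - cos s) / k)))"
    using ne by (intro continuous_intros; (intro ballI ne)?; (insert assms, simp)?)
  then show ?thesis unfolding gf_def Uf_def .
qed

lemma Uf_deriv: assumes "k > 0" "c > 0"
  shows "(Uf k c has_real_derivative sin s / (k * Uf k c s)) (at s)"
proof -
  have d1: "((\<lambda>s. c + 2 * (1 - cos s) / k) has_real_derivative 2 * sin s / k) (at s)"
    using assms by (auto intro!: derivative_eq_intros)
  have pos: "0 < c + 2 * (1 - cos s) / k" using Uf_pos[OF assms, of s] unfolding Uf_def by simp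
  have "((\<lambda>s. sqrt (c + 2 * (1 - cos s) / k)) has_real_derivative
        inverse (sqrt (c + 2 * (1 - cos s) / k)) / 2 * (2 * sin s / k)) (at s)"
    by (rule DERIV_chain2[OF DERIV_real_sqrt[OF pos] d1])
  moreover have "inverse (sqrt (c + 2 * (1 - cos s) / k)) / 2 * (2 * sin s / k) = sin s / (k * Uf k c s)"
    unfolding Uf_def using assms by (simp add: field_simps)
  ultimately show ?thesis unfolding Uf_def[abs_def] by simp
qed

lemma gf_pos: assumes "k > 0" "c > 0" "-(pi/2) < t" "t < pi/2" shows "0 < gf k c t"
  unfolding gf_def using Uf_pos[OF assms(1,2), of t] assms cos_gt_zero_pi[of t] by simp

lemma tan_sin: assumes "cos x > 0" shows "tan x / sqrt (1 + (tan x)\<^sup>2) = sin x"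
proof -
  have "1 + (tan x)\<^sup>2 = (1 / cos x)\<^sup>2"
    using assms unfolding tan_def by (simp add: field_simps power2_eq_square)
  then have "sqrt (1 + (tan x)\<^sup>2) = 1 / cos x" using assms by simp
  then show ?thesis using assms unfolding tan_def by simp
qed


lemma construct:
  fixes k c p :: real
  assumes k: "k > 0" and c: "c > 0" and p: "0 < p" "p \<le> pi/2"
  defines "A \<equiv> integral {0..p} (gf k c)"
  shows "\<exists>u du :: real \<Rightarrow> real. u 0 = sqrt c \<and> du 0 = 0 \<and>
           (\<forall>r \<in> {0..<A}.
              (u has_real_derivative du r) (at r within {0..<A}) \<and>
              ((\<lambda>s. du s / sqrt (1 + (du s)\<^sup>2)) has_real_derivative k * u r)
                 (at r within {0..<A})) \<and>
           ((\<lambda>r. du r / sqrt (1 + (du r)\<^sup>2)) \<longlongrightarrow> sin p) (at_left A)"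
proof -
  define g where "g = gf k c"
  have gc: "continuous_on S g" for S unfolding g_def by (rule gf_cont[OF k c])
  have gpos: "\<And>t. -(pi/2) < t \<Longrightarrow> t < pi/2 \<Longrightarrow> 0 < g t"
    unfolding g_def using gf_pos[OF k c] by blast
  define R where "R t = integral {-pi..t} g - integral {-pi..0} g" for t
  have Rd: "(R has_real_derivative g t) (at t)" if "-pi < t" "t < pi" for t
  proof -
    have "((\<lambda>u. integral {-pi..u} g) has_vector_derivative g t) (at t within {-pi..pi})"
      using that by (intro integral_has_vector_derivative gc) auto
    moreover have "at t within {-pi..pi} = at t"
      using that by (intro at_within_interior) auto
    ultimately have "((\<lambda>u. integral {-pi..u} g) has_real_derivative g t) (at t)"
      by (simp add: has_real_derivative_iff_has_vector_derivative)
    then have "((\<lambda>u. integral {-pi..u} g - integral {-pi..0} g) has_real_derivative g t - 0) (at t)"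
      by (intro DERIV_diff DERIV_const)
    then show ?thesis unfolding R_def[abs_def] by simp
  qed
  have R0: "R 0 = 0" unfolding R_def by simp
  have Rp: "R p = A"
  proof -
    have "integral {-pi..0} g + integral {0..p} g = integral {-pi..p} g"
      using p pi_gt_zero by (intro Henstock_Kurzweil_Integration.integral_combine[where a="-pi" and c=0 and b=p] integrable_continuous_interval gc) auto
    then show ?thesis unfolding R_def A_def g_def by simp
  qed
  define lo :: real where "lo = -(pi/4)"
  have lo: "-pi < lo" "lo < 0" "-(pi/2) < lo" unfolding lo_def by (auto simp: pi_gt_zero)
  have pl: "p < pi" using p pi_gt_zero by linarith
  have Rcont: "continuous_on {lo..p} R"
    using lo pl by (intro continuous_at_imp_continuous_on ballI DERIV_isCont[OF Rd]) auto
  have Rmono: "R x < R y" if "lo \<le> x" "x < y" "y \<le> p" for x y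
  proof (rule DERIV_pos_imp_increasing_open[OF \<open>x < y\<close>])
    fix t assume "x < t" "t < y"
    then show "\<exists>d. (R has_real_derivative d) (at t) \<and> 0 < d"
      using that lo pl p by (intro exI[of _ "g t"] conjI Rd gpos) auto
  next
    show "continuous_on {x..y} R" using that by (intro continuous_on_subset[OF Rcont]) auto
  qed
  have Rle: "R x \<le> R y" if "lo \<le> x" "x \<le> y" "y \<le> p" for x y
    using Rmono[of x y] that by (cases "x = y") auto
  have inj: "inj_on R {lo..p}"
  proof (rule inj_onI)
    fix x y assume "x \<in> {lo..p}" "y \<in> {lo..p}" "R x = R y"
    then show "x = y" using Rmono[of x y] Rmono[of y x] by (cases x y rule: linorder_cases) auto
  qed
  have lop: "lo \<le> p" using lo p by simp
  have img: "R ` {lo..p} = {R lo..R p}"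
  proof
    show "R ` {lo..p} \<subseteq> {R lo..R p}" using Rle by auto
    show "{R lo..R p} \<subseteq> R ` {lo..p}"
    proof
      fix y assume "y \<in> {R lo..R p}"
      then obtain x where "lo \<le> x" "x \<le> p" "R x = y"
        using IVT'[of R lo y p, OF _ _ lop Rcont] by auto
      then show "y \<in> R ` {lo..p}" by auto
    qed
  qed
  define Psi where "Psi = inv_into {lo..p} R"
  have RPsi: "R (Psi y) = y" "Psi y \<in> {lo..p}" if "y \<in> {R lo..R p}" for y
  proof -
    have y: "y \<in> R ` {lo..p}" using that img by simp
    show "R (Psi y) = y" unfolding Psi_def using y by (rule f_inv_into_f)
    show "Psi y \<in> {lo..p}" unfolding Psi_def using y by (rule inv_into_into)
  qed
  have PsiR: "Psi (R x) = x" if "x \<in> {lo..p}" for x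
    using inj that unfolding Psi_def by (rule inv_into_f_f)
  have Psicont: "continuous_on {R lo..R p} Psi"
    using continuous_on_inv[OF Rcont compact_Icc] PsiR img by auto
  have Rlo: "R lo < 0" using Rmono[of lo 0] lo p R0 by auto
  have Apos: "0 < A" using Rmono[of 0 p] lo p R0 Rp by auto
  have Psi_in: "lo < Psi r \<and> Psi r < p" if "R lo < r" "r < A" for r
  proof -
    have r: "r \<in> {R lo..R p}" using that Rp by auto
    have "Psi r \<noteq> lo" using RPsi(1)[OF r] that by auto
    moreover have "Psi r \<noteq> p" using RPsi(1)[OF r] that Rp by auto
    ultimately show ?thesis using RPsi(2)[OF r] by auto
  qed
  have Psi_nonneg: "0 \<le> Psi r" if "0 \<le> r" "r < A" for r
  proof (rule ccontr)
    assume "\<not> 0 \<le> Psi r"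
    then have "R (Psi r) < R 0" using Psi_in[of r] that Rlo p by (intro Rmono) auto
    then show False using RPsi(1)[of r] that R0 Rlo Rp by auto
  qed
  have Psi0: "Psi 0 = 0" using PsiR[of 0] R0 lo p by auto
  have PsiA: "Psi A = p" using PsiR[of p] Rp lo p by auto
  have Psid: "(Psi has_real_derivative inverse (g (Psi r))) (at r)" if "R lo < r" "r < A" for r
  proof (rule DERIV_inverse_function[where f=R and a="R lo" and b=A])
    show "(R has_real_derivative g (Psi r)) (at (Psi r))"
      using Psi_in[OF that] lo pl by (intro Rd) auto
    show "g (Psi r) \<noteq> 0" using Psi_in[OF that] lo p gpos[of "Psi r"] by auto
    show "R lo < r" "r < A" by fact+
    show "R (Psi y) = y" if "R lo < y" "y < A" for y using that Rp by (intro RPsi) auto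
    show "isCont Psi r" using that Rp by (intro continuous_on_interior[OF Psicont]) auto
  qed
  define u where "u r = Uf k c (Psi r)" for r
  define du where "du r = tan (Psi r)" for r
  have cospos: "0 < cos (Psi r)" if "0 \<le> r" "r < A" for r
    using Psi_nonneg[OF that] Psi_in[of r] that Rlo p by (intro cos_gt_zero_pi) auto
  have eqsin: "du s / sqrt (1 + (du s)\<^sup>2) = sin (Psi s)" if "s \<in> {0..<A}" for s
    unfolding du_def using cospos[of s] that by (intro tan_sin) auto
  have main: "(u has_real_derivative du r) (at r within {0..<A}) \<and>
              ((\<lambda>s. du s / sqrt (1 + (du s)\<^sup>2)) has_real_derivative k * u r) (at r within {0..<A})"
    if r: "r \<in> {0..<A}" for r
  proof
    let ?t = "Psi r"
    have r': "R lo < r" "r < A" using r Rlo by auto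
    have cp: "0 < cos ?t" using cospos r by auto
    have Up: "0 < Uf k c ?t" by (rule Uf_pos[OF k c])
    have ginv: "inverse (g ?t) = k * Uf k c ?t / cos ?t"
      unfolding g_def gf_def by simp
    have "(u has_real_derivative sin ?t / (k * Uf k c ?t) * inverse (g ?t)) (at r)"
      unfolding u_def by (rule DERIV_chain2[OF Uf_deriv[OF k c] Psid[OF r']])
    moreover have "sin ?t / (k * Uf k c ?t) * inverse (g ?t) = du r"
      unfolding ginv du_def tan_def using k Up cp by (simp add: field_simps)
    ultimately have "(u has_real_derivative du r) (at r)" by simp
    then show "(u has_real_derivative du r) (at r within {0..<A})"
      by (rule has_field_derivative_at_within)
    have "((\<lambda>s. sin (Psi s)) has_real_derivative cos ?t * inverse (g ?t)) (at r)"
      by (rule DERIV_chain2[OF DERIV_sin Psid[OF r']])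
    moreover have "cos ?t * inverse (g ?t) = k * u r"
      unfolding ginv u_def using k Up cp by (simp add: field_simps)
    ultimately have "((\<lambda>s. sin (Psi s)) has_real_derivative k * u r) (at r within {0..<A})"
      by (simp add: has_field_derivative_at_within)
    then show "((\<lambda>s. du s / sqrt (1 + (du s)\<^sup>2)) has_real_derivative k * u r) (at r within {0..<A})"
      by (rule has_field_derivative_transform_within[where d=1]) (use r eqsin in auto)
  qed
  have lim: "((\<lambda>r. du r / sqrt (1 + (du r)\<^sup>2)) \<longlongrightarrow> sin p) (at_left A)"
  proof -
    have "(Psi \<longlongrightarrow> Psi A) (at A within {R lo..A})"
      using Psicont Rp Apos Rlo unfolding continuous_on_def by auto
    moreover have "at A within {R lo..A} = at_left A"
      using Apos Rlo by (intro at_within_Icc_at_left) auto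
    ultimately have "(Psi \<longlongrightarrow> p) (at_left A)" using PsiA by simp
    then have "((\<lambda>r. sin (Psi r)) \<longlongrightarrow> sin p) (at_left A)" by (rule tendsto_sin)
    moreover have "eventually (\<lambda>r. sin (Psi r) = du r / sqrt (1 + (du r)\<^sup>2)) (at_left A)"
      using Apos eqsin by (intro eventually_at_leftI[of 0]) (auto simp: eqsin)
    ultimately show ?thesis by (rule Lim_transform_eventually)
  qed
  have u0: "u 0 = sqrt c" unfolding u_def Psi0 Uf_def by simp
  have du0: "du 0 = 0" unfolding du_def Psi0 by simp
  show ?thesis using u0 du0 main lim by blast
qed



lemma F_upper:
  assumes k: "k > 0" and c: "c > 0" and p: "0 \<le> p" "p \<le> pi/2"
  shows "integral {0..p} (gf k c) \<le> p / (k * sqrt c)"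
proof -
  have "integral {0..p} (gf k c) \<le> integral {0..p} (\<lambda>s. 1 / (k * sqrt c))"
  proof (rule integral_le)
    show "gf k c integrable_on {0..p}" by (intro integrable_continuous_interval gf_cont k c)
    show "(\<lambda>s. 1 / (k * sqrt c)) integrable_on {0..p}" by (intro integrable_continuous_interval continuous_intros)
    fix s assume s: "s \<in> {0..p}"
    have c0: "0 \<le> cos s" using s p by (intro cos_ge_zero) auto
    have U: "sqrt c \<le> Uf k c s" by (rule Uf_ge[OF k c])
    have kU: "k * sqrt c \<le> k * Uf k c s" using U k by simp
    have pos: "0 < k * sqrt c" using k c by simp
    have "cos s / (k * Uf k c s) \<le> 1 / (k * Uf k c s)"
      using pos kU by (intro divide_right_mono) auto
    also have "\<dots> \<le> 1 / (k * sqrt c)" using pos kU by (intro divide_left_mono) auto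
    finally show "gf k c s \<le> 1 / (k * sqrt c)" unfolding gf_def .
  qed
  also have "\<dots> = p / (k * sqrt c)" using p by simp
  finally show ?thesis .
qed

lemma one_minus_cos_le: "1 - cos (s::real) \<le> s\<^sup>2 / 2"
proof -
  have "cos s = 1 - 2 * sin (s/2) ^ 2" using cos_double_sin[of "s/2"] by simp
  moreover have "sin (s/2) ^ 2 \<le> (s/2)^2"
    using abs_sin_x_le_abs_x[of "s/2"] by (metis abs_ge_zero power2_abs power_mono)
  ultimately show ?thesis by (simp add: power_divide)
qed

lemma F_lower:
  assumes k: "k > 0" and c: "c > 0" and b: "0 < b" "b \<le> p" "b \<le> pi/3" and p: "p \<le> pi/2"
  defines "e \<equiv> sqrt k * sqrt c"
  shows "(ln (e + b) - ln e) / (2 * sqrt k) \<le> integral {0..p} (gf k c)"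
proof -
  have e: "0 < e" unfolding e_def using k c by simp
  have sk: "0 < sqrt k" using k by simp
  define h where "h s = 1 / (2 * sqrt k * (e + s))" for s
  have hint: "(h has_integral ((ln (e + b) - ln e) / (2 * sqrt k))) {0..b}"
  proof -
    have "(h has_integral (ln (e + b) / (2 * sqrt k) - ln (e + 0) / (2 * sqrt k))) {0..b}"
    proof (rule fundamental_theorem_of_calculus)
      show "0 \<le> b" using b by simp
      fix x assume x: "x \<in> {0..b}"
      have "((\<lambda>s. ln (e + s)) has_real_derivative (1 / (e + x))) (at x)"
        using e x by (auto intro!: derivative_eq_intros)
      then have "((\<lambda>s. ln (e + s) / (2 * sqrt k)) has_real_derivative (1 / (e + x)) / (2 * sqrt k)) (at x)"
        by (rule DERIV_cdivide)
      then have "((\<lambda>s. ln (e + s) / (2 * sqrt k)) has_real_derivative h x) (at x within {0..b})"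
        unfolding h_def by (simp add: has_field_derivative_at_within field_simps)
      then show "((\<lambda>s. ln (e + s) / (2 * sqrt k)) has_vector_derivative h x) (at x within {0..b})"
        by (simp add: has_real_derivative_iff_has_vector_derivative)
    qed
    then show ?thesis by (simp add: diff_divide_distrib)
  qed
  have gi: "gf k c integrable_on {x..y}" for x y by (intro integrable_continuous_interval gf_cont k c)
  have "integral {0..b} h \<le> integral {0..b} (gf k c)"
  proof (rule integral_le)
    show "h integrable_on {0..b}" using hint by blast
    show "gf k c integrable_on {0..b}" by (rule gi)
    fix s assume s: "s \<in> {0..b}"
    have s0: "0 \<le> s" "s \<le> pi/3" using s b by auto
    have "pi/3 \<le> pi" using pi_gt_zero by linarith
    then have "cos (pi/3) \<le> cos s" using s0 by (intro cos_monotone_0_pi_le) auto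
    then have cs: "1/2 \<le> cos s" by (simp add: cos_60)
    have "(Uf k c s)\<^sup>2 = c + 2 * (1 - cos s) / k"
    proof -
      have "0 \<le> c + 2 * (1 - cos s) / k" using c k by (intro add_nonneg_nonneg divide_nonneg_pos) auto
      then show ?thesis unfolding Uf_def by (rule real_sqrt_pow2)
    qed
    also have "\<dots> \<le> c + s\<^sup>2 / k"
      using one_minus_cos_le[of s] k by (simp add: divide_right_mono)
    also have "\<dots> \<le> (sqrt c + s / sqrt k)\<^sup>2"
    proof -
      have sq: "(sqrt c + s / sqrt k)\<^sup>2 = (sqrt c)\<^sup>2 + (s / sqrt k)\<^sup>2 + 2 * sqrt c * (s / sqrt k)"
        by (rule power2_sum)
      have "(sqrt c)\<^sup>2 = c" using c by simp
      moreover have "(s / sqrt k)\<^sup>2 = s\<^sup>2 / k" using k by (simp add: power_divide)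
      moreover have "0 \<le> 2 * sqrt c * (s / sqrt k)" using s c sk by simp
      ultimately show ?thesis using sq by linarith
    qed
    finally have "Uf k c s \<le> sqrt c + s / sqrt k"
          proof (rule power2_le_imp_le)
      show "0 \<le> sqrt c + s / sqrt k" using s0 sk c by (intro add_nonneg_nonneg divide_nonneg_pos) auto
    qed
    then have "k * Uf k c s \<le> k * (sqrt c + s / sqrt k)"
      using k by (intro mult_left_mono) auto
    also have "\<dots> = sqrt k * (e + s)"
    proof -
      have kk: "sqrt k * sqrt k = k" using k by simp
      have "k * (sqrt c + s / sqrt k) = (sqrt k * sqrt k) * (sqrt c + s / sqrt k)" using kk by simp
      also have "\<dots> = sqrt k * (sqrt k * sqrt c) + sqrt k * (sqrt k * (s / sqrt k))"
        by (simp only: distrib_left mult.assoc)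
      also have "sqrt k * (s / sqrt k) = s" using sk by simp
      also have "sqrt k * (sqrt k * sqrt c) + sqrt k * s = sqrt k * (sqrt k * sqrt c + s)"
        by (simp only: distrib_left)
      finally show ?thesis unfolding e_def .
    qed
    finally have kU: "k * Uf k c s \<le> sqrt k * (e + s)" .
    have pU: "0 < k * Uf k c s" using Uf_pos[OF k c] k by simp
    have "h s = (1/2) / (sqrt k * (e + s))" unfolding h_def by simp
    also have "\<dots> \<le> (1/2) / (k * Uf k c s)"
      using kU pU by (intro divide_left_mono) auto
    also have "\<dots> \<le> cos s / (k * Uf k c s)"
      using cs pU by (intro divide_right_mono) auto
    finally show "h s \<le> gf k c s" unfolding gf_def .
  qed
  also have "\<dots> \<le> integral {0..b} (gf k c) + integral {b..p} (gf k c)"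
  proof -
    have "0 \<le> integral {b..p} (gf k c)"
    proof (rule integral_nonneg)
      show "gf k c integrable_on {b..p}" by (rule gi)
      fix s assume s: "s \<in> {b..p}"
      have "0 \<le> cos s" using s b p by (intro cos_ge_zero) auto
      then show "0 \<le> gf k c s" unfolding gf_def using Uf_pos[OF k c, of s] k by simp
    qed
    then show ?thesis by simp
  qed
  also have "\<dots> = integral {0..p} (gf k c)"
    using b by (intro Henstock_Kurzweil_Integration.integral_combine[where a=0 and c=b and b=p] gi) auto
  finally show ?thesis using integral_unique[OF hint] by linarith
qed


lemma inv_diff_bound:
  fixes m A B :: real
  assumes m: "0 < m" "m \<le> A" "m \<le> B"
  shows "\<bar>1/A - 1/B\<bar> \<le> \<bar>B\<^sup>2 - A\<^sup>2\<bar> / (2 * m^3)"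
proof -
  have A: "0 < A" and B: "0 < B" using m by auto
  have e1: "1/A - 1/B = (B - A) / (A * B)" using A B by (simp add: field_simps)
  have e2: "\<bar>B\<^sup>2 - A\<^sup>2\<bar> = \<bar>B - A\<bar> * (A + B)"
  proof -
    have "B\<^sup>2 - A\<^sup>2 = (B - A) * (A + B)" by (simp add: power2_eq_square algebra_simps)
    then show ?thesis using A B by (simp add: abs_mult)
  qed
  have m2: "m * m \<le> A * B" using m by (intro mult_mono) auto
  have mm: "0 < m * m" using m by simp
  have AB: "0 < A * B" using A B by simp
  have "\<bar>1/A - 1/B\<bar> = \<bar>B - A\<bar> / (A * B)" by (simp only: e1 abs_divide abs_of_pos[OF AB])
  also have "\<dots> \<le> \<bar>B - A\<bar> / (m * m)" using m2 mm by (intro divide_left_mono) simp_all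
  also have "\<dots> = \<bar>B - A\<bar> * (2 * m) / (2 * m^3)"
  proof -
    have c3: "2 * m^3 = (m * m) * (2 * m)" by (simp add: power3_eq_cube)
    have "\<bar>B - A\<bar> * (2 * m) / ((m * m) * (2 * m)) = \<bar>B - A\<bar> / (m * m)"
      using m by (intro mult_divide_mult_cancel_right) simp
    then show ?thesis by (simp only: c3)
  qed
  also have "\<dots> \<le> \<bar>B - A\<bar> * (A + B) / (2 * m^3)"
  proof (rule divide_right_mono)
    show "\<bar>B - A\<bar> * (2 * m) \<le> \<bar>B - A\<bar> * (A + B)" using m by (intro mult_left_mono) simp_all
    show "0 \<le> 2 * m^3" using m by simp
  qed
  finally show ?thesis unfolding e2 .
qed

lemma gf_lip:
  assumes k: "k > 0" and m: "0 < m" and x: "m\<^sup>2 \<le> x" and y: "m\<^sup>2 \<le> y"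
  shows "\<bar>gf k x s - gf k y s\<bar> \<le> \<bar>x - y\<bar> / (2 * k * m^3)"
proof -
  have xp: "0 < x" "0 < y" using zero_less_power[OF m, of 2] x y by linarith+
  have mx: "m \<le> Uf k x s" "m \<le> Uf k y s"
    using Uf_ge[OF k xp(1), of s] Uf_ge[OF k xp(2), of s] m x y
    by (auto intro: order_trans real_le_rsqrt)
  have sq: "(Uf k y s)\<^sup>2 - (Uf k x s)\<^sup>2 = y - x"
  proof -
    have "0 \<le> 2 * (1 - cos s) / k" using k by (intro divide_nonneg_pos) auto
    then show ?thesis unfolding Uf_def using xp by simp
  qed
  have "gf k x s - gf k y s = cos s / k * (1 / Uf k x s - 1 / Uf k y s)"
    unfolding gf_def using k by (simp add: field_simps)
  then have "\<bar>gf k x s - gf k y s\<bar> = \<bar>cos s\<bar> / k * \<bar>1 / Uf k x s - 1 / Uf k y s\<bar>"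
    using k by (simp add: abs_mult)
  also have "\<dots> \<le> 1 / k * (\<bar>y - x\<bar> / (2 * m^3))"
  proof (rule mult_mono)
    show "\<bar>cos s\<bar> / k \<le> 1 / k" using k by (intro divide_right_mono) auto
    show "\<bar>1 / Uf k x s - 1 / Uf k y s\<bar> \<le> \<bar>y - x\<bar> / (2 * m^3)"
      using inv_diff_bound[OF m mx] unfolding sq .
  qed (use k in auto)
  also have "\<dots> = \<bar>x - y\<bar> / (2 * k * m^3)" by (simp add: abs_minus_commute)
  finally show ?thesis .
qed

lemma F_lip:
  assumes k: "k > 0" and m: "0 < m" and x: "m\<^sup>2 \<le> x" and y: "m\<^sup>2 \<le> y" and p: "0 \<le> p"
  shows "\<bar>integral {0..p} (gf k x) - integral {0..p} (gf k y)\<bar> \<le> p * (\<bar>x - y\<bar> / (2 * k * m^3))"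
proof -
  have xp: "0 < x" "0 < y" using zero_less_power[OF m, of 2] x y by linarith+
  let ?L = "\<bar>x - y\<bar> / (2 * k * m^3)"
  have ix: "gf k x integrable_on {0..p}" "gf k y integrable_on {0..p}"
    using xp by (auto intro!: integrable_continuous_interval gf_cont k)
  have d: "integral {0..p} (gf k x) - integral {0..p} (gf k y) = integral {0..p} (\<lambda>s. gf k x s - gf k y s)"
    using ix by (simp add: integral_diff)
  have idi: "(\<lambda>s. gf k x s - gf k y s) integrable_on {0..p}" using ix by (intro integrable_diff)
  have ci: "(\<lambda>s. c) integrable_on {0..p}" for c :: real by (intro integrable_continuous_interval continuous_intros)
  have b: "\<bar>gf k x s - gf k y s\<bar> \<le> ?L" for s by (rule gf_lip[OF k m x y])
  have b2: "- ?L \<le> gf k x s - gf k y s" for s using b[of s] by linarith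
  have "integral {0..p} (\<lambda>s. gf k x s - gf k y s) \<le> integral {0..p} (\<lambda>s. ?L)"
    using b by (intro integral_le idi ci) (auto simp: abs_le_iff)
  moreover have "integral {0..p} (\<lambda>s. - ?L) \<le> integral {0..p} (\<lambda>s. gf k x s - gf k y s)"
    by (intro integral_le idi ci b2)
  ultimately show ?thesis unfolding d using p by (simp add: abs_le_iff)
qed



theorem mainTheorem8:
  fixes \<kappa> a \<gamma> :: real
  assumes "\<kappa> > 0" and "a > 0" and "0 \<le> \<gamma>" and "\<gamma> < pi / 2"
  shows "\<exists>u0 > 0. \<exists>u du :: real \<Rightarrow> real.
           u 0 = u0 \<and> du 0 = 0 \<and>
           (\<forall>r \<in> {0..<a}.
              (u has_real_derivative du r) (at r within {0..<a}) \<and>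
              ((\<lambda>s. du s / sqrt (1 + (du s)\<^sup>2)) has_real_derivative \<kappa> * u r)
                 (at r within {0..<a})) \<and>
           ((\<lambda>r. du r / sqrt (1 + (du r)\<^sup>2)) \<longlongrightarrow> cos \<gamma>) (at_left a)"
proof -
  note k = assms(1) and a = assms(2)
  define p where "p = pi/2 - \<gamma>"
  have p: "0 < p" "p \<le> pi/2" using assms unfolding p_def by auto
  have sp: "sin p = cos \<gamma>" unfolding p_def by (simp add: sin_diff)
  define F where "F c = integral {0..p} (gf \<kappa> c)" for c
  define b where "b = min p (pi/3)"
  have b: "0 < b" "b \<le> p" "b \<le> pi/3" unfolding b_def using p pi_gt_zero by auto
  have sk: "0 < sqrt \<kappa>" using k by simp
  define e where "e = b / exp (2 * sqrt \<kappa> * a)"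
  have e: "0 < e" unfolding e_def using b by simp
  define c1 where "c1 = (e / sqrt \<kappa>)\<^sup>2"
  have sc1: "sqrt c1 = e / sqrt \<kappa>" unfolding c1_def using e sk by simp
  have c1: "0 < c1" unfolding c1_def using e sk by simp
  have ec: "sqrt \<kappa> * sqrt c1 = e" unfolding sc1 using sk by simp
  have F1: "a < F c1"
  proof -
    have lo: "(ln (e + b) - ln e) / (2 * sqrt \<kappa>) \<le> F c1"
      using F_lower[OF k c1 b p(2)] unfolding F_def ec .
    have le: "ln e = ln b - 2 * sqrt \<kappa> * a" unfolding e_def using b by (simp add: ln_div)
    have "ln b < ln (e + b)" using e b by simp
    then have "2 * sqrt \<kappa> * a < ln (e + b) - ln e" unfolding le by simp
    then have "a < (ln (e + b) - ln e) / (2 * sqrt \<kappa>)" using sk by (simp add: field_simps)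
    then show ?thesis using lo by linarith
  qed
  define c2 where "c2 = c1 + (2 * p / (\<kappa> * a))\<^sup>2"
  have c12: "c1 \<le> c2" unfolding c2_def by simp
  have c2: "0 < c2" using c1 c12 by linarith
  have sc2: "2 * p / (\<kappa> * a) \<le> sqrt c2"
  proof -
    have "sqrt ((2 * p / (\<kappa> * a))\<^sup>2) \<le> sqrt c2" unfolding c2_def using c1 by (intro real_sqrt_le_mono) simp
    then show ?thesis using p k a by simp
  qed
  have F2: "F c2 < a"
  proof -
    have "F c2 \<le> p / (\<kappa> * sqrt c2)" unfolding F_def using F_upper[OF k c2, of p] p by simp
    also have "\<dots> \<le> p / (\<kappa> * (2 * p / (\<kappa> * a)))"
      using sc2 p k a c2 by (intro divide_left_mono mult_left_mono mult_pos_pos) auto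
    also have "\<dots> = a / 2" using p k a by (simp add: field_simps)
    finally show ?thesis using a by linarith
  qed
  define m where "m = sqrt c1"
  have m: "0 < m" "m\<^sup>2 = c1" unfolding m_def using c1 by auto
  have Fc: "continuous_on {c1..c2} F"
  proof (rule lipschitz_on_continuous_on)
    show "(p / (2 * \<kappa> * m^3))-lipschitz_on {c1..c2} F"
    proof (rule lipschitz_onI)
      fix x y assume xy: "x \<in> {c1..c2}" "y \<in> {c1..c2}"
      have "\<bar>F x - F y\<bar> \<le> p * (\<bar>x - y\<bar> / (2 * \<kappa> * m^3))"
        unfolding F_def using xy m p by (intro F_lip k) auto
      then show "dist (F x) (F y) \<le> p / (2 * \<kappa> * m^3) * dist x y"
        by (simp add: dist_real_def)
    next
      show "0 \<le> p / (2 * \<kappa> * m^3)" using p k m by simp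
    qed
  qed
  obtain c where c: "c1 \<le> c" "c \<le> c2" "F c = a"
    using IVT2'[of F c2 a c1, OF less_imp_le[OF F2] less_imp_le[OF F1] c12 Fc] by auto
  have cpos: "0 < c" using c c1 by linarith
  obtain u du :: "real \<Rightarrow> real" where
    "u 0 = sqrt c \<and> du 0 = 0 \<and>
           (\<forall>r \<in> {0..<F c}.
              (u has_real_derivative du r) (at r within {0..<F c}) \<and>
              ((\<lambda>s. du s / sqrt (1 + (du s)\<^sup>2)) has_real_derivative \<kappa> * u r)
                 (at r within {0..<F c})) \<and>
           ((\<lambda>r. du r / sqrt (1 + (du r)\<^sup>2)) \<longlongrightarrow> sin p) (at_left (F c))"
    using construct[OF k cpos p] unfolding F_def by blast
  then show ?thesis unfolding c(3) sp using cpos by (intro exI[of _ "sqrt c"]) auto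
qed

end
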